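(* Let $(\mathfrak g,[-,-])$ be a Lie algebra and let $\mathcal B$ be a nondegenerate commutative 2-cocycle on $(\mathfrak g,[-,-])$. Then there exists a (unique) bilinear operation $\circ:\mathfrak g\otimes\mathfrak g\to\mathfrak g$ satisfying $$\mathcal B(x\circ y,z)=\mathcal B(y,[x,z]),\qquad \forall x,y,z\in\mathfrak g,$$ and $(\mathfrak g,\circ)$ is a compatible anti-pre-Lie algebra structure on $(\mathfrak g,[-,-])$, i.e. $(\mathfrak g,\circ)$ is an anti-pre-Lie algebra and $x\circ y-y\circ x=[x,y]$ for all $x,y\in\mathfrak g$.
   Context: All vector spaces are finite-dimensional over a field $\mathbb F$ of characteristic $0$. A commutative 2-cocycle on a Lie algebra $(\mathfrak g,[-,-])$ is a symmetric bilinear form $\mathcal B$ on $\mathfrak g$ such that $\mathcal B([x,y],z)+\mathcal B([y,z],x)+\mathcal B([z,x],y)=0$ for all $x,y,z$. An anti-pre-Lie algebra is a vector space $A$ with a bilinear operation $\circ$ such that, writing $[x,y]=x\circ y-y\circ x$, for all $x,y,z\in A$: (i) $x\circ(y\circ z)-y\circ(x\circ z)=[y,x]\circ z$, and (ii) $[x,y]\circ z+[y,z]\circ x+[z,x]\circ y=0$. *)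

theory Defs
  imports Complex_Main
begin

definition fin_dim_vs :: "('k::field \<Rightarrow> 'v::ab_group_add \<Rightarrow> 'v) \<Rightarrow> bool" where
  "fin_dim_vs scale \<longleftrightarrow> (\<exists>Basis. finite_dimensional_vector_space scale Basis)"

definition bilinear_op :: "('k::field \<Rightarrow> 'v::ab_group_add \<Rightarrow> 'v) \<Rightarrow> ('v \<Rightarrow> 'v \<Rightarrow> 'v) \<Rightarrow> bool" where
  "bilinear_op scale f \<longleftrightarrow>
     (\<forall>x. Vector_Spaces.linear scale scale (f x)) \<and> (\<forall>y. Vector_Spaces.linear scale scale (\<lambda>x. f x y))"

definition bilinear_form :: "('k::field \<Rightarrow> 'v::ab_group_add \<Rightarrow> 'v) \<Rightarrow> ('v \<Rightarrow> 'v \<Rightarrow> 'k) \<Rightarrow> bool" where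
  "bilinear_form scale B \<longleftrightarrow>
     (\<forall>x. Vector_Spaces.linear scale (*) (B x)) \<and> (\<forall>y. Vector_Spaces.linear scale (*) (\<lambda>x. B x y))"

definition lie_algebra :: "('k::field \<Rightarrow> 'v::ab_group_add \<Rightarrow> 'v) \<Rightarrow> ('v \<Rightarrow> 'v \<Rightarrow> 'v) \<Rightarrow> bool" where
  "lie_algebra scale br \<longleftrightarrow> bilinear_op scale br \<and>
     (\<forall>x. br x x = 0) \<and>
     (\<forall>x y z. br x (br y z) + br y (br z x) + br z (br x y) = 0)"

definition commutative_2_cocycle :: "('k::field \<Rightarrow> 'v::ab_group_add \<Rightarrow> 'v) \<Rightarrow> ('v \<Rightarrow> 'v \<Rightarrow> 'v) \<Rightarrow> ('v \<Rightarrow> 'v \<Rightarrow> 'k) \<Rightarrow> bool" where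
  "commutative_2_cocycle scale br B \<longleftrightarrow> bilinear_form scale B \<and>
     (\<forall>x y. B x y = B y x) \<and>
     (\<forall>x y z. B (br x y) z + B (br y z) x + B (br z x) y = 0)"

definition nondegenerate :: "('v::ab_group_add \<Rightarrow> 'v \<Rightarrow> 'k::field) \<Rightarrow> bool" where
  "nondegenerate B \<longleftrightarrow> (\<forall>x. (\<forall>y. B x y = 0) \<longrightarrow> x = 0)"

definition anti_pre_lie :: "('k::field \<Rightarrow> 'v::ab_group_add \<Rightarrow> 'v) \<Rightarrow> ('v \<Rightarrow> 'v \<Rightarrow> 'v) \<Rightarrow> bool" where
  "anti_pre_lie scale op \<longleftrightarrow> bilinear_op scale op \<and>
     (let c = (\<lambda>x y. op x y - op y x) in
       (\<forall>x y z. op x (op y z) - op y (op x z) = op (c y x) z) \<and>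
       (\<forall>x y z. op (c x y) z + op (c y z) x + op (c z x) y = 0))"

end

theory Submission
  imports Defs
begin

lemma lin6:
  fixes t1 :: "'a::field"
  assumes "t1 + p1 + q1 = 0" "t2 + p2 + q2 = 0" "t3 + p3 + q3 = 0" "q1 + q2 + q3 = 0"
    "p1 + x1 + y1 = 0" "p2 + x2 + y2 = 0" "p3 + x3 + y3 = 0"
    "x1 + y3 = - t2" "x2 + y1 = - t3" "x3 + y2 = - t1"
  shows "2 * (t1 + t2 + t3) = 0"
  using assms by algebra

context
  fixes scale :: "'k::field_char_0 \<Rightarrow> 'v::ab_group_add \<Rightarrow> 'v"
    and br :: "'v \<Rightarrow> 'v \<Rightarrow> 'v"
    and B :: "'v \<Rightarrow> 'v \<Rightarrow> 'k"
  assumes vs: "vector_space scale"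
    and fd: "fin_dim_vs scale"
    and lie: "lie_algebra scale br"
    and coc: "commutative_2_cocycle scale br B"
    and nd: "nondegenerate B"
begin

lemma Bl: "Vector_Spaces.linear scale (*) (B x)"
  using coc unfolding commutative_2_cocycle_def bilinear_form_def by blast
lemma Br: "Vector_Spaces.linear scale (*) (\<lambda>x. B x y)"
  using coc unfolding commutative_2_cocycle_def bilinear_form_def by blast
lemma brl: "Vector_Spaces.linear scale scale (br x)"
  using lie unfolding lie_algebra_def bilinear_op_def by blast
lemma brr: "Vector_Spaces.linear scale scale (\<lambda>x. br x y)"
  using lie unfolding lie_algebra_def bilinear_op_def by blast

lemma mh: "Vector_Spaces.linear s1 s2 f \<Longrightarrow> module_hom s1 s2 f"
  by (simp add: module_hom_iff_linear)

lemma Badd1[simp]: "B (x + y) z = B x z + B y z" using module_hom.add[OF mh[OF Br]] .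
lemma Badd2[simp]: "B z (x + y) = B z x + B z y" using module_hom.add[OF mh[OF Bl]] .
lemma Bdiff1[simp]: "B (x - y) z = B x z - B y z" using module_hom.diff[OF mh[OF Br]] .
lemma Bdiff2[simp]: "B z (x - y) = B z x - B z y" using module_hom.diff[OF mh[OF Bl]] .
lemma Bneg1[simp]: "B (- x) z = - B x z" using module_hom.neg[OF mh[OF Br]] .
lemma Bneg2[simp]: "B z (- x) = - B z x" using module_hom.neg[OF mh[OF Bl]] .
lemma B01[simp]: "B 0 z = 0" using module_hom.zero[OF mh[OF Br]] .
lemma B02[simp]: "B z 0 = 0" using module_hom.zero[OF mh[OF Bl]] .
lemma Bsc1[simp]: "B (scale c x) z = c * B x z" using module_hom.scale[OF mh[OF Br]] .
lemma Bsc2[simp]: "B z (scale c x) = c * B z x" using module_hom.scale[OF mh[OF Bl]] .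

lemma bradd1[simp]: "br (x + y) z = br x z + br y z" using module_hom.add[OF mh[OF brr]] .
lemma bradd2[simp]: "br z (x + y) = br z x + br z y" using module_hom.add[OF mh[OF brl]] .
lemma brdiff1[simp]: "br (x - y) z = br x z - br y z" using module_hom.diff[OF mh[OF brr]] .
lemma brdiff2[simp]: "br z (x - y) = br z x - br z y" using module_hom.diff[OF mh[OF brl]] .
lemma brneg1[simp]: "br (- x) z = - br x z" using module_hom.neg[OF mh[OF brr]] .
lemma brneg2[simp]: "br z (- x) = - br z x" using module_hom.neg[OF mh[OF brl]] .
lemma brsc1[simp]: "br (scale c x) z = scale c (br x z)" using module_hom.scale[OF mh[OF brr]] .
lemma brsc2[simp]: "br z (scale c x) = scale c (br z x)" using module_hom.scale[OF mh[OF brl]] .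

lemma Bsym: "B x y = B y x"
  using coc unfolding commutative_2_cocycle_def by blast
lemma cocy: "B (br x y) z + B (br y z) x + B (br z x) y = 0"
  using coc unfolding commutative_2_cocycle_def by blast
lemma jac: "br x (br y z) + br y (br z x) + br z (br x y) = 0"
  using lie unfolding lie_algebra_def by blast
lemma anti: "br y x = - br x y"
proof -
  have "br (x + y) (x + y) = 0" "br x x = 0" "br y y = 0"
    using lie unfolding lie_algebra_def by blast+
  then have "br x y + br y x = 0" by (simp add: algebra_simps)
  then show ?thesis by (simp add: eq_neg_iff_add_eq_0 add.commute)
qed

lemma J: "br (br a b) c = - br a (br c b) - br (br c a) b"
proof -
  have "br a (br c b) + br c (br b a) + br b (br a c) = 0" by (rule jac)
  moreover have "br c (br b a) = br (br a b) c" using anti[of b a] anti[of c "br a b"] by simp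
  moreover have "br b (br a c) = br (br c a) b" using anti[of a c] anti[of b "br c a"] by simp
  ultimately have "br a (br c b) + br (br a b) c + br (br c a) b = 0" by simp
  then show ?thesis by (simp add: algebra_simps eq_neg_iff_add_eq_0)
qed

lemma eqI: "(\<And>z. B u z = B v z) \<Longrightarrow> u = v"
proof -
  assume "\<And>z. B u z = B v z"
  then have "\<forall>z. B (u - v) z = 0" by simp
  then have "u - v = 0" using nd unfolding nondegenerate_def by blast
  then show "u = v" by simp
qed

lemma riesz:
  assumes lf: "Vector_Spaces.linear scale (*) f"
  shows "\<exists>w. \<forall>y. B w y = f y"
proof -
  obtain Bas where "finite_dimensional_vector_space scale Bas"
    using fd unfolding fin_dim_vs_def by blast
  then interpret V: finite_dimensional_vector_space scale Bas .
  have agree: "\<forall>y. B w y = g y" if lg: "Vector_Spaces.linear scale (*) g" and h: "\<forall>b\<in>Bas. B w b = g b" for w g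
  proof
    fix y
    have "y \<in> V.span Bas" using V.span_Basis by simp
    then show "B w y = g y"
    proof (induct rule: V.span_induct_alt)
      case base then show ?case using module_hom.zero[OF mh[OF lg]] by simp
    next
      case (step c x y)
      then show ?case using h module_hom.add[OF mh[OF lg]] module_hom.scale[OF mh[OF lg]] by simp
    qed
  qed
  have indep: "\<And>u. (\<Sum>v\<in>Bas. scale (u v) v) = 0 \<Longrightarrow> \<forall>v\<in>Bas. u v = 0"
    using V.independent_Basis V.dependent_finite[OF V.finite_Basis] by blast
  define L where "L v = (\<Sum>b\<in>Bas. scale (B v b) b)" for v
  have linL: "Vector_Spaces.linear scale scale L"
    unfolding Vector_Spaces.linear_iff
  proof (intro conjI allI)
    show "vector_space scale" by (rule vs)
    show "vector_space scale" by (rule vs)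
    fix x y show "L (x + y) = L x + L y"
      unfolding L_def by (simp add: V.scale_left_distrib sum.distrib)
  next
    fix c x show "L (scale c x) = scale c (L x)"
      unfolding L_def by (simp add: V.scale_sum_right)
  qed
  have "inj L"
  proof (rule injI)
    fix u v assume "L u = L v"
    have "(\<Sum>b\<in>Bas. scale (B u b - B v b) b) = L u - L v"
      unfolding L_def by (simp add: V.scale_left_diff_distrib sum_subtractf)
    then have "(\<Sum>b\<in>Bas. scale (B u b - B v b) b) = 0" using \<open>L u = L v\<close> by simp
    then have "\<forall>b\<in>Bas. B u b - B v b = 0" by (rule indep)
    then have "\<forall>b\<in>Bas. B u b = B v b" by simp
    then have "\<forall>y. B u y = B v y" by (rule agree[OF Bl[of v], of u])
    then show "u = v" using eqI by blast
  qed
  then have "surj L" by (rule V.linear_inj_imp_surj[OF linL])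
  then obtain w where w: "L w = (\<Sum>b\<in>Bas. scale (f b) b)" by (metis surjD)
  have "(\<Sum>b\<in>Bas. scale (B w b - f b) b) = L w - (\<Sum>b\<in>Bas. scale (f b) b)"
    unfolding L_def by (simp add: V.scale_left_diff_distrib sum_subtractf)
  then have "(\<Sum>b\<in>Bas. scale (B w b - f b) b) = 0" using w by simp
  then have "\<forall>b\<in>Bas. B w b - f b = 0" by (rule indep)
  then have "\<forall>b\<in>Bas. B w b = f b" by simp
  then have "\<forall>y. B w y = f y" by (rule agree[OF lf, of w])
  then show ?thesis by blast
qed

lemma op_ex: "\<exists>op. \<forall>x y z. B (op x y) z = B y (br x z)"
proof -
  have "\<exists>w. \<forall>z. B w z = B y (br x z)" for x y
    using riesz[OF Vector_Spaces.linear_compose[OF brl[of x] Bl[of y]]] by simp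
  note ex = this
  define op where "op x y = (SOME w. \<forall>z. B w z = B y (br x z))" for x y
  have "\<forall>z. B (op x y) z = B y (br x z)" for x y
    unfolding op_def by (rule someI_ex) (rule ex)
  then show ?thesis by blast
qed

lemma comm_eq:
  assumes opP: "\<And>x y z. B (op x y) z = B y (br x z)"
  shows "op x y - op y x = br x y"
proof (rule eqI)
  fix z
  have c: "B (br x y) z + B (br y z) x + B (br z x) y = 0" by (rule cocy)
  have "B y (br x z) = - B (br z x) y" using Bsym[of y "br x z"] anti[of x z] by simp
  moreover have "B x (br y z) = B (br y z) x" by (rule Bsym)
  ultimately have "B (op x y - op y x) z = - B (br z x) y - B (br y z) x" by (simp add: opP)
  also have "\<dots> = B (br x y) z" using c by algebra
  finally show "B (op x y - op y x) z = B (br x y) z" .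
qed

lemma G0: "B z (br (br x y) w) + B x (br (br y z) w) + B y (br (br z x) w) = 0"
proof -
  define T1 where "T1 = B z (br (br x y) w)"
  define T2 where "T2 = B x (br (br y z) w)"
  define T3 where "T3 = B y (br (br z x) w)"
  have c1: "T1 + B (br w z) (br x y) + B (br z (br x y)) w = 0"
    unfolding T1_def using cocy[of "br x y" w z] Bsym[of z] by simp
  have c2: "T2 + B (br w x) (br y z) + B (br x (br y z)) w = 0"
    unfolding T2_def using cocy[of "br y z" w x] Bsym[of x] by simp
  have c3: "T3 + B (br w y) (br z x) + B (br y (br z x)) w = 0"
    unfolding T3_def using cocy[of "br z x" w y] Bsym[of y] by simp
  have j: "B (br z (br x y)) w + B (br x (br y z)) w + B (br y (br z x)) w = 0"
    using arg_cong[OF jac[of z x y], of "\<lambda>v. B v w"] by (simp add: algebra_simps)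
  have d1: "B (br w z) (br x y) + B (br y (br w z)) x + B (br (br w z) x) y = 0"
    using cocy[of x y "br w z"] Bsym[of "br w z"] by simp
  have d2: "B (br w x) (br y z) + B (br z (br w x)) y + B (br (br w x) y) z = 0"
    using cocy[of y z "br w x"] Bsym[of "br w x"] by simp
  have d3: "B (br w y) (br z x) + B (br x (br w y)) z + B (br (br w y) z) x = 0"
    using cocy[of z x "br w y"] Bsym[of "br w y"] by simp
  have e1: "B (br y (br w z)) x + B (br (br w y) z) x = - T2"
  proof -
    have "T2 = B (br (br y z) w) x" unfolding T2_def by (rule Bsym)
    also have "\<dots> = - (B (br y (br w z)) x + B (br (br w y) z) x)"
      unfolding J[of y z w] by simp
    finally show ?thesis by simp
  qed
  have e2: "B (br z (br w x)) y + B (br (br w z) x) y = - T3"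
  proof -
    have "T3 = B (br (br z x) w) y" unfolding T3_def by (rule Bsym)
    also have "\<dots> = - (B (br z (br w x)) y + B (br (br w z) x) y)"
      unfolding J[of z x w] by simp
    finally show ?thesis by simp
  qed
  have e3: "B (br x (br w y)) z + B (br (br w x) y) z = - T1"
  proof -
    have "T1 = B (br (br x y) w) z" unfolding T1_def by (rule Bsym)
    also have "\<dots> = - (B (br x (br w y)) z + B (br (br w x) y) z)"
      unfolding J[of x y w] by simp
    finally show ?thesis by simp
  qed
  have "2 * (T1 + T2 + T3) = 0"
    using lin6[OF c1 c2 c3 j d1 d2 d3 e1 e2 e3] .
  then have "T1 + T2 + T3 = 0" by (metis mult_eq_0_iff zero_neq_numeral)
  then show ?thesis unfolding T1_def T2_def T3_def .
qed

lemma main: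
  assumes opP: "\<And>x y z. B (op x y) z = B y (br x z)"
  shows "bilinear_op scale op \<and> anti_pre_lie scale op"
proof -
  have bil: "bilinear_op scale op"
    unfolding bilinear_op_def Vector_Spaces.linear_iff
    by (intro conjI allI vs; rule eqI; simp add: opP)
  have ce: "op x y - op y x = br x y" for x y by (rule comm_eq[OF opP])
  have i: "op x (op y z) - op y (op x z) = op (br y x) z" for x y z
  proof (rule eqI)
    fix w
    have a1: "br y (br w x) = - br y (br x w)" using anti[of w x] by simp
    have a2: "br (br w y) x = br x (br y w)" using anti[of "br w y" x] anti[of w y] by simp
    have "br y (br x w) - br x (br y w) = br (br y x) w"
      unfolding J[of y x w] a1 a2 by simp
    then have "B z (br y (br x w)) - B z (br x (br y w)) = B z (br (br y x) w)"
      using arg_cong[of _ _ "B z"] by (metis Bdiff2)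
    then show "B (op x (op y z) - op y (op x z)) w = B (op (br y x) z) w"
      by (simp add: opP)
  qed
  have ii: "op (br x y) z + op (br y z) x + op (br z x) y = 0" for x y z
    by (rule eqI) (simp add: opP G0)
  show ?thesis unfolding anti_pre_lie_def Let_def ce using bil i ii by simp
qed

end

theorem theorem2p19:
  fixes scale :: "'k::field_char_0 \<Rightarrow> 'v::ab_group_add \<Rightarrow> 'v"
    and br :: "'v \<Rightarrow> 'v \<Rightarrow> 'v"
    and B :: "'v \<Rightarrow> 'v \<Rightarrow> 'k"
  assumes "vector_space scale"
    and "fin_dim_vs scale"
    and "lie_algebra scale br"
    and "commutative_2_cocycle scale br B"
    and "nondegenerate B"
  shows "(\<exists>op. bilinear_op scale op \<and>
              (\<forall>x y z. B (op x y) z = B y (br x z)) \<and>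
              anti_pre_lie scale op \<and>
              (\<forall>x y. op x y - op y x = br x y)) \<and>
         (\<forall>op1 op2. (\<forall>x y z. B (op1 x y) z = B y (br x z)) \<and>
                    (\<forall>x y z. B (op2 x y) z = B y (br x z)) \<longrightarrow> op1 = op2)"
proof
  obtain op where opP: "\<forall>x y z. B (op x y) z = B y (br x z)"
    using op_ex[OF assms] by blast
  show "\<exists>op. bilinear_op scale op \<and>
              (\<forall>x y z. B (op x y) z = B y (br x z)) \<and>
              anti_pre_lie scale op \<and>
              (\<forall>x y. op x y - op y x = br x y)"
    using main[OF assms, of op] comm_eq[OF assms, of op] opP by blast
next
  show "\<forall>op1 op2. (\<forall>x y z. B (op1 x y) z = B y (br x z)) \<and>
                    (\<forall>x y z. B (op2 x y) z = B y (br x z)) \<longrightarrow> op1 = op2"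
  proof (intro allI impI ext)
    fix op1 op2 x y
    assume h: "(\<forall>x y z. B (op1 x y) z = B y (br x z)) \<and> (\<forall>x y z. B (op2 x y) z = B y (br x z))"
    show "op1 x y = op2 x y" using h by (intro eqI[OF assms]) simp
  qed
qed

end
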